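(* Let $A\in\mathbb{R}^{n\times n}$ be symmetric positive definite, $b\in\mathbb{R}^n$, $B>0$, $L=\lambda_{\max}(A)$. For $y\in\mathbb{R}^n$ and $0<\eta\le 1/n$, define the threshold loop $\theta_0=0$, $\theta_{t+1}=\theta_t+\eta\big[\|\mathcal S_{\theta_t}(y)\|_1-B\big]_+$, where $\mathcal S_\theta(y)$ is computed by the two-layer ReLU network $W_2\,\mathrm{ReLU}(W_1y-\theta[\mathbf 1_n;\mathbf 1_n])$ with $W_1=\begin{bmatrix}I_n\\-I_n\end{bmatrix}$, $W_2=[I_n\ \ -I_n]$. Then $\theta_t$ converges to some $\theta^\star\ge0$ and $\mathcal S_{\theta^\star}(y)=\operatorname{Proj}_{\{\|x\|_1\le B\}}(y)$ is the exact Euclidean projection of $y$ onto the $\ell_1$-ball of radius $B$. Consequently, a gradient step $y_k=x_k-\gamma(Ax_k+b)$ followed by this loop yields $x_{k+1}=\operatorname{Proj}_{\{\|x\|_1\le B\}}\big(x_k-\gamma(Ax_k+b)\big)$, and if $0<\gamma\le1/L$, the iterates $x_k$ converge to an optimal solution of $\min_x \tfrac12x^\top Ax+b^\top x$ subject to $\|x\|_1\le B$.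
   Context: $\mathcal S_\theta(y)=\operatorname{sign}(y)\odot(|y|-\theta)_+$ is coordinatewise soft-thresholding; $[u]_+=\max\{u,0\}$; $\mathrm{ReLU}$ is applied elementwise; $\mathbf 1_n$ is the all-ones vector; $\operatorname{Proj}_{\{\|x\|_1\le B\}}$ denotes Euclidean projection onto $\{x:\|x\|_1\le B\}$. *)

theory Defs
  imports "HOL-Analysis.Analysis"
begin

definition l1norm :: "real^'n \<Rightarrow> real" where
  "l1norm x = (\<Sum>i\<in>UNIV. \<bar>x $ i\<bar>)"

definition l1ball :: "real \<Rightarrow> (real^'n) set" where
  "l1ball B = {x. l1norm x \<le> B}"

definition soft_thresh :: "real \<Rightarrow> real^'n \<Rightarrow> real^'n" where
  "soft_thresh \<theta> y = (\<chi> i. sgn (y $ i) * max (\<bar>y $ i\<bar> - \<theta>) 0)"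

definition relu :: "real^'m \<Rightarrow> real^'m" where
  "relu z = (\<chi> i. max (z $ i) 0)"

text \<open>W1 = [I; -I] (2n x n), W2 = [I, -I] (n x 2n); index set of size 2n is 'n + 'n\<close>
definition W1 :: "real^'n^('n + 'n)" where
  "W1 = (\<chi> k j. case k of Inl i \<Rightarrow> (if i = j then 1 else 0)
                        | Inr i \<Rightarrow> (if i = j then -1 else 0))"

definition W2 :: "real^('n + 'n)^'n" where
  "W2 = (\<chi> i k. case k of Inl j \<Rightarrow> (if i = j then 1 else 0)
                        | Inr j \<Rightarrow> (if i = j then -1 else 0))"

definition nn_soft :: "real \<Rightarrow> real^'n \<Rightarrow> real^'n" where
  "nn_soft \<theta> y = W2 *v relu (W1 *v y - \<theta> *\<^sub>R (1 :: real^('n + 'n)))"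

primrec thr_seq :: "real \<Rightarrow> real \<Rightarrow> real^'n \<Rightarrow> nat \<Rightarrow> real" where
  "thr_seq \<eta> B y 0 = 0"
| "thr_seq \<eta> B y (Suc t) =
     thr_seq \<eta> B y t + \<eta> * max (l1norm (nn_soft (thr_seq \<eta> B y t) y) - B) 0"

definition lambda_max :: "real^'n^'n \<Rightarrow> real" where
  "lambda_max A = Max {c. \<exists>v. v \<noteq> 0 \<and> A *v v = c *\<^sub>R v}"

definition quad_obj :: "real^'n^'n \<Rightarrow> real^'n \<Rightarrow> real^'n \<Rightarrow> real" where
  "quad_obj A b x = (1/2) * (x \<bullet> (A *v x)) + b \<bullet> x"

end

theory Submission
  imports Defs
begin


lemma sum_UNIV_plus:
  fixes f :: "('a::finite + 'b::finite) \<Rightarrow> real"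
  shows "sum f UNIV = (\<Sum>i\<in>UNIV. f (Inl i)) + (\<Sum>j\<in>UNIV. f (Inr j))"
proof -
  have "sum f UNIV = sum f (Inl ` UNIV) + sum f (Inr ` UNIV)"
    by (subst UNIV_sum, rule sum.union_disjoint) auto
  also have "\<dots> = (\<Sum>i\<in>UNIV. f (Inl i)) + (\<Sum>j\<in>UNIV. f (Inr j))"
    by (simp add: sum.reindex)
  finally show ?thesis .
qed

lemma ifmul: "(if P then a else 0) * (c::real) = (if P then a*c else 0)" by simp

lemma nn_soft_eq:
  fixes y :: "real^'n"
  assumes "\<theta> \<ge> 0"
  shows "nn_soft \<theta> y = soft_thresh \<theta> y"
proof -
  have "nn_soft \<theta> y $ i = soft_thresh \<theta> y $ i" for i
  proof -
    have W: "(W1 *v y) $ Inl i = y $ i" "(W1 *v y) $ Inr i = - y $ i" for i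
      by (simp_all add: W1_def matrix_vector_mult_def ifmul)
    define r where "r = relu (W1 *v y - \<theta> *\<^sub>R (1 :: real^('n + 'n)))"
    have r: "r $ Inl i = max (y$i - \<theta>) 0" "r $ Inr i = max (- y$i - \<theta>) 0" for i
      by (simp_all add: r_def relu_def W)
    have W2: "(W2 *v r) $ i = r $ Inl i - r $ Inr i" for i
      by (simp add: matrix_vector_mult_def sum_UNIV_plus W2_def ifmul)
    have "nn_soft \<theta> y $ i = max (y$i - \<theta>) 0 - max (- y$i - \<theta>) 0"
      unfolding nn_soft_def r_def[symmetric] W2 r ..
    also have "\<dots> = soft_thresh \<theta> y $ i"
      using assms by (auto simp: soft_thresh_def sgn_if abs_if max_def)
    finally show ?thesis .
  qed
  then show ?thesis by (simp add: vec_eq_iff)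
qed


lemma l1ball_convex: "convex (l1ball B :: (real^'n) set)"
proof (rule convexI)
  fix x z :: "real^'n" and u v :: real
  assume x: "x \<in> l1ball B" and z: "z \<in> l1ball B" and u: "0 \<le> u" and v: "0 \<le> v" and uv: "u + v = 1"
  have "l1norm (u *\<^sub>R x + v *\<^sub>R z) \<le> (\<Sum>i\<in>UNIV. u * \<bar>x$i\<bar> + v * \<bar>z$i\<bar>)"
    unfolding l1norm_def
  proof (rule sum_mono)
    fix i
    have "\<bar>u * x$i + v * z$i\<bar> \<le> \<bar>u * x$i\<bar> + \<bar>v * z$i\<bar>" by (rule abs_triangle_ineq)
    then show "\<bar>(u *\<^sub>R x + v *\<^sub>R z) $ i\<bar> \<le> u * \<bar>x$i\<bar> + v * \<bar>z$i\<bar>"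
      using u v by (simp add: abs_mult)
  qed
  also have "\<dots> = u * l1norm x + v * l1norm z"
    by (simp add: l1norm_def sum.distrib sum_distrib_left)
  also have "\<dots> \<le> u * B + v * B"
    using x z u v by (intro add_mono mult_left_mono) (auto simp: l1ball_def)
  also have "\<dots> = B" using uv by (metis distrib_left mult.commute mult_1_right)
  finally show "u *\<^sub>R x + v *\<^sub>R z \<in> l1ball B" by (simp add: l1ball_def)
qed

lemma l1norm_cont: "continuous_on S (l1norm :: real^'n \<Rightarrow> real)"
  unfolding l1norm_def[abs_def] by (intro continuous_intros)

lemma l1ball_closed: "closed (l1ball B :: (real^'n) set)"
  unfolding l1ball_def by (intro closed_Collect_le l1norm_cont continuous_on_const)

lemma closest_point_by_dot:
  fixes S :: "(real^'n) set"
  assumes "convex S" "closed S" "x \<in> S" "\<forall>z\<in>S. (y - x) \<bullet> (z - x) \<le> 0"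
  shows "closest_point S y = x"
proof -
  have "\<forall>z\<in>S. dist y x \<le> dist y z"
  proof
    fix z assume "z \<in> S"
    have "(dist y z)^2 = (norm ((y - x) - (z - x)))^2" by (simp add: dist_norm)
    also have "\<dots> = (norm (y-x))^2 - 2 * ((y - x) \<bullet> (z - x)) + (norm (z-x))^2"
      by (simp add: power2_norm_eq_inner inner_diff_left inner_diff_right inner_commute)
    also have "\<dots> \<ge> (norm (y-x))^2" using assms(4) \<open>z \<in> S\<close> zero_le_power2[of "norm (z-x)"]
      by (smt (verit))
    finally have "(dist y x)^2 \<le> (dist y z)^2" by (simp add: dist_norm)
    then show "dist y x \<le> dist y z" by (rule power2_le_imp_le[OF _ zero_le_dist])
  qed
  then show ?thesis using closest_point_unique[OF assms(1-3)] by metis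
qed

lemma soft_comp:
  assumes "\<theta> \<ge> (0::real)"
  shows "\<bar>y - sgn y * max (\<bar>y\<bar> - \<theta>) 0\<bar> \<le> \<theta>"
    and "(y - sgn y * max (\<bar>y\<bar> - \<theta>) 0) * (sgn y * max (\<bar>y\<bar> - \<theta>) 0) = \<theta> * \<bar>sgn y * max (\<bar>y\<bar> - \<theta>) 0\<bar>"
proof -
  consider "y > 0" | "y < 0" | "y = 0" by linarith
  then show "\<bar>y - sgn y * max (\<bar>y\<bar> - \<theta>) 0\<bar> \<le> \<theta>"
    using assms by cases (auto simp: max_def)
next
  consider "y > 0" | "y < 0" | "y = 0" by linarith
  then show "(y - sgn y * max (\<bar>y\<bar> - \<theta>) 0) * (sgn y * max (\<bar>y\<bar> - \<theta>) 0) = \<theta> * \<bar>sgn y * max (\<bar>y\<bar> - \<theta>) 0\<bar>"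
    using assms by cases (auto simp: max_def algebra_simps)
qed

lemma proj_char:
  fixes y :: "real^'n"
  assumes th: "\<theta> \<ge> 0" and le: "l1norm (soft_thresh \<theta> y) \<le> B"
    and cs: "\<theta> * (l1norm (soft_thresh \<theta> y) - B) = 0"
  shows "closest_point (l1ball B) y = soft_thresh \<theta> y"
proof (rule closest_point_by_dot[OF l1ball_convex l1ball_closed])
  let ?x = "soft_thresh \<theta> y"
  show "?x \<in> l1ball B" using le by (simp add: l1ball_def)
  show "\<forall>z\<in>l1ball B. (y - ?x) \<bullet> (z - ?x) \<le> 0"
  proof
    fix z :: "real^'n" assume z: "z \<in> l1ball B"
    have c: "(y - ?x)$i = y$i - sgn (y$i) * max (\<bar>y$i\<bar> - \<theta>) 0" "?x $ i = sgn (y$i) * max (\<bar>y$i\<bar> - \<theta>) 0" for i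
      by (simp_all add: soft_thresh_def)
    have "(y - ?x) \<bullet> z = (\<Sum>i\<in>UNIV. (y - ?x)$i * z$i)" by (simp add: inner_vec_def)
    also have "\<dots> \<le> (\<Sum>i\<in>UNIV. \<theta> * \<bar>z$i\<bar>)"
    proof (rule sum_mono)
      fix i
      have "(y - ?x)$i * z$i \<le> \<bar>(y - ?x)$i\<bar> * \<bar>z$i\<bar>" by (metis abs_ge_self abs_mult)
      also have "\<dots> \<le> \<theta> * \<bar>z$i\<bar>" unfolding c by (rule mult_right_mono[OF soft_comp(1)[OF th]]) simp
      finally show "(y - ?x)$i * z$i \<le> \<theta> * \<bar>z$i\<bar>" .
    qed
    also have "\<dots> = \<theta> * l1norm z" by (simp add: l1norm_def sum_distrib_left)
    also have "\<dots> \<le> \<theta> * B" using z th by (intro mult_left_mono) (auto simp: l1ball_def)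
    finally have 1: "(y - ?x) \<bullet> z \<le> \<theta> * B" .
    have "(y - ?x) \<bullet> ?x = (\<Sum>i\<in>UNIV. (y - ?x)$i * ?x$i)" by (simp add: inner_vec_def)
    also have "\<dots> = (\<Sum>i\<in>UNIV. \<theta> * \<bar>?x$i\<bar>)" unfolding c by (intro sum.cong refl soft_comp(2)[OF th])
    also have "\<dots> = \<theta> * l1norm ?x" by (simp add: l1norm_def sum_distrib_left)
    also have "\<dots> = \<theta> * B" using cs by (simp add: algebra_simps)
    finally have 2: "(y - ?x) \<bullet> ?x = \<theta> * B" .
    show "(y - ?x) \<bullet> (z - ?x) \<le> 0" using 1 2 by (simp add: inner_diff_right)
  qed
qed


definition gfun :: "real^'n \<Rightarrow> real \<Rightarrow> real" where
  "gfun y \<theta> = (\<Sum>i\<in>UNIV. max (\<bar>y$i\<bar> - \<theta>) 0)"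

lemma l1_soft: "\<theta> \<ge> 0 \<Longrightarrow> l1norm (soft_thresh \<theta> y) = gfun y \<theta>"
  unfolding l1norm_def gfun_def soft_thresh_def
  by (intro sum.cong refl) (auto simp: abs_mult sgn_if max_def)

lemma gfun_anti: assumes "\<theta> \<le> \<theta>'" shows "gfun y \<theta>' \<le> gfun y \<theta>"
  unfolding gfun_def using assms by (intro sum_mono) auto

lemma gfun_lip:
  fixes y :: "real^'n"
  assumes "\<theta> \<le> \<theta>'"
  shows "gfun y \<theta> - gfun y \<theta>' \<le> real CARD('n) * (\<theta>' - \<theta>)"
proof -
  have "gfun y \<theta> - gfun y \<theta>' = (\<Sum>i\<in>UNIV. max (\<bar>y$i\<bar> - \<theta>) 0 - max (\<bar>y$i\<bar> - \<theta>') 0)"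
    by (simp add: gfun_def sum_subtractf)
  also have "\<dots> \<le> (\<Sum>i\<in>(UNIV::'n set). \<theta>' - \<theta>)"
    using assms by (intro sum_mono) (auto simp: max_def)
  also have "\<dots> = real CARD('n) * (\<theta>' - \<theta>)" by simp
  finally show ?thesis .
qed

lemma gfun_cont: "continuous_on S (gfun y)"
  unfolding gfun_def[abs_def] by (intro continuous_intros)

lemma gfun_big:
  fixes y :: "real^'n"
  assumes "\<theta> \<ge> (\<Sum>i\<in>UNIV. \<bar>y$i\<bar>)"
  shows "gfun y \<theta> = 0"
proof -
  have "\<bar>y$i\<bar> \<le> \<theta>" for i
    using member_le_sum[of i UNIV "\<lambda>i. \<bar>y$i\<bar>"] assms by simp
  then show ?thesis unfolding gfun_def by (simp add: max_def)
qed

lemma thr_main: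
  fixes y :: "real^'n"
  assumes eta: "0 < \<eta>" "\<eta> \<le> 1 / real CARD('n)" and Bpos: "B > 0"
  shows "\<exists>\<theta>s. \<theta>s \<ge> 0 \<and> thr_seq \<eta> B y \<longlonglongrightarrow> \<theta>s
                 \<and> nn_soft \<theta>s y = closest_point (l1ball B) y"
proof -
  define s where "s = thr_seq \<eta> B y"
  define g where "g = gfun y"
  have etan: "\<eta> * real CARD('n) \<le> 1" using eta by (simp add: field_simps)
  have nonneg: "s t \<ge> 0" for t
    by (induction t) (use eta in \<open>auto simp: s_def\<close>)
  have step: "s (Suc t) = s t + \<eta> * max (g (s t) - B) 0" for t
    using nonneg[of t] by (simp add: s_def g_def nn_soft_eq l1_soft)
  have inc: "s t \<le> s (Suc t)" for t
    using step[of t] eta by simp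
  have incs: "incseq s" using inc by (simp add: incseq_SucI)
  have inv: "s t = 0 \<or> g (s t) \<ge> B" for t
  proof (induction t)
    case 0 then show ?case by (simp add: s_def)
  next
    case (Suc t)
    show ?case
    proof (cases "g (s t) \<le> B")
      case True
      then have "s (Suc t) = s t" using step[of t] by simp
      then show ?thesis using Suc by simp
    next
      case False
      then have e: "s (Suc t) = s t + \<eta> * (g (s t) - B)" using step[of t] by simp
      have "g (s t) - g (s (Suc t)) \<le> real CARD('n) * (s (Suc t) - s t)"
        unfolding g_def by (rule gfun_lip[OF inc])
      also have "\<dots> = (\<eta> * real CARD('n)) * (g (s t) - B)" using e by simp
      also have "\<dots> \<le> 1 * (g (s t) - B)"
        using etan False by (intro mult_right_mono) auto
      finally show ?thesis by simp
    qed
  qed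
  define R where "R = (\<Sum>i\<in>UNIV. \<bar>y$i\<bar>)"
  have R0: "R \<ge> 0" by (simp add: R_def sum_nonneg)
  have bnd: "s t \<le> R" for t
  proof (rule ccontr)
    assume "\<not> s t \<le> R"
    then have "g (s t) = 0" unfolding g_def R_def by (intro gfun_big) simp
    then show False using inv[of t] Bpos R0 \<open>\<not> s t \<le> R\<close> by auto
  qed
  have bdd: "bdd_above (range s)" using bnd by (intro bdd_aboveI[where M=R]) auto
  define L where "L = (SUP i. s i)"
  have lim: "s \<longlonglongrightarrow> L" unfolding L_def by (rule LIMSEQ_incseq_SUP[OF bdd incs])
  have L0: "L \<ge> 0" by (rule LIMSEQ_le_const[OF lim]) (use nonneg in auto)
  have gc: "isCont g x" for x
    using gfun_cont[of UNIV y] unfolding g_def by (simp add: continuous_on_eq_continuous_at)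
  have glim: "(\<lambda>t. g (s t)) \<longlonglongrightarrow> g L"
    by (rule isCont_tendsto_compose[OF gc lim])
  have l1: "(\<lambda>t. s (Suc t)) \<longlonglongrightarrow> L" using lim by (rule LIMSEQ_Suc)
  have l2: "(\<lambda>t. s (Suc t)) \<longlonglongrightarrow> L + \<eta> * max (g L - B) 0"
    unfolding step by (intro tendsto_intros lim glim)
  have "L = L + \<eta> * max (g L - B) 0" using LIMSEQ_unique[OF l1 l2] .
  then have gL: "g L \<le> B" using eta by simp
  have cs: "L * (g L - B) = 0"
  proof (cases "\<forall>t. s t = 0")
    case True
    then have "s = (\<lambda>t. 0)" by auto
    then have "s \<longlonglongrightarrow> 0" by simp
    then have "L = 0" using LIMSEQ_unique[OF lim] by simp
    then show ?thesis by simp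
  next
    case False
    then obtain t0 where t0: "s t0 \<noteq> 0" by auto
    have "\<forall>t\<ge>t0. B \<le> g (s t)"
    proof (intro allI impI)
      fix t assume "t0 \<le> t"
      then have "s t0 \<le> s t" using incs by (simp add: incseq_def)
      then have "s t \<noteq> 0" using t0 nonneg[of t0] by auto
      then show "B \<le> g (s t)" using inv[of t] by auto
    qed
    then have "B \<le> g L" by (intro LIMSEQ_le_const[OF glim]) auto
    then show ?thesis using gL by simp
  qed
  have "closest_point (l1ball B) y = soft_thresh L y"
    by (rule proj_char) (use L0 gL cs in \<open>simp_all add: l1_soft g_def\<close>)
  then show ?thesis using L0 lim nn_soft_eq[OF L0, of y] by (auto simp: s_def)
qed


lemma sym_dot:
  fixes A :: "real^'n^'n"
  assumes symA: "transpose A = A"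
  shows "u \<bullet> (A *v w) = (A *v u) \<bullet> w"
proof -
  have "(A *v u) \<bullet> w = (u v* transpose A) \<bullet> w" by simp
  also have "\<dots> = u \<bullet> (A *v w)" using symA dot_lmul_matrix by metis
  finally show ?thesis by simp
qed

lemma quad_hom: "(c *\<^sub>R u) \<bullet> (A *v (c *\<^sub>R u)) = c^2 * (u \<bullet> (A *v u))" for A :: "real^'n^'n"
  by (simp add: matrix_vector_mult_scaleR power2_eq_square)

lemma rayleigh_max:
  fixes A :: "real^'n^'n"
  shows "\<exists>v. norm v = 1 \<and> (\<forall>w. w \<bullet> (A *v w) \<le> (v \<bullet> (A *v v)) * (norm w)^2)"
proof -
  have "continuous_on (sphere 0 1) (\<lambda>u::real^'n. u \<bullet> (A *v u))"
    by (intro continuous_intros linear_continuous_on matrix_vector_mul_bounded_linear)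
  moreover have "sphere (0::real^'n) 1 \<noteq> {}"
    using norm_axis_1[of undefined] by (metis mem_sphere_0 empty_iff)
  ultimately obtain v where v: "v \<in> sphere 0 1" "\<forall>u\<in>sphere 0 1. u \<bullet> (A *v u) \<le> v \<bullet> (A *v v)"
    using continuous_attains_sup[OF compact_sphere] by blast
  have "w \<bullet> (A *v w) \<le> (v \<bullet> (A *v v)) * (norm w)^2" for w
  proof (cases "w = 0")
    case True then show ?thesis by simp
  next
    case False
    let ?u = "(1 / norm w) *\<^sub>R w"
    have "?u \<in> sphere 0 1" using False by simp
    then have "?u \<bullet> (A *v ?u) \<le> v \<bullet> (A *v v)" using v by blast
    then have "(1/norm w)^2 * (w \<bullet> (A *v w)) \<le> v \<bullet> (A *v v)" by (simp only: quad_hom)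
    then have "(norm w)^2 * ((1/norm w)^2 * (w \<bullet> (A *v w))) \<le> (norm w)^2 * (v \<bullet> (A *v v))"
      by (rule mult_left_mono) simp
    then show ?thesis using False by (simp add: field_simps power2_eq_square)
  qed
  then show ?thesis using v(1) by auto
qed

lemma rayleigh_min:
  fixes A :: "real^'n^'n"
  shows "\<exists>v. norm v = 1 \<and> (\<forall>w. (v \<bullet> (A *v v)) * (norm w)^2 \<le> w \<bullet> (A *v w))"
proof -
  obtain v where v: "norm v = 1" "\<forall>w. w \<bullet> ((-A) *v w) \<le> (v \<bullet> ((-A) *v v)) * (norm w)^2"
    using rayleigh_max[of "-A"] by blast
  have "(-A) *v w = - (A *v w)" for w :: "real^'n"
    by (simp add: vec_eq_iff matrix_vector_mult_def sum_negf)
  then show ?thesis using v by (intro exI[of _ v]) auto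
qed



lemma mulif: "(a::real) * (if P then b else 0) = (if P then a*b else 0)" by simp

lemma psd_null:
  fixes C :: "real^'n^'n"
  assumes symC: "transpose C = C" and psd: "\<forall>x. x \<bullet> (C *v x) \<ge> 0" and z: "v \<bullet> (C *v v) = 0"
  shows "C *v v = 0"
proof (rule ccontr)
  assume ne: "C *v v \<noteq> 0"
  define w where "w = C *v v"
  define K where "K = w \<bullet> (C *v w)"
  have K0: "K \<ge> 0" using psd by (simp add: K_def)
  have ww: "w \<bullet> w > 0" using ne by (simp add: w_def)
  define t where "t = (w \<bullet> w) / (K + 1)"
  have t0: "t > 0" using ww K0 by (simp add: t_def)
  have vw: "v \<bullet> (C *v w) = w \<bullet> w" using sym_dot[OF symC, of v w] by (simp add: w_def)
  have wv: "w \<bullet> (C *v v) = w \<bullet> w" by (simp add: w_def)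
  have "(v - t *\<^sub>R w) \<bullet> (C *v (v - t *\<^sub>R w)) = v \<bullet> (C *v v) - t * (v \<bullet> (C *v w)) - t * (w \<bullet> (C *v v)) + t * t * K"
    by (simp add: K_def algebra_simps inner_diff_left inner_diff_right)
  also have "\<dots> = t * (t * K - 2 * (w \<bullet> w))" using z vw wv by (simp add: algebra_simps)
  finally have "0 \<le> t * (t * K - 2 * (w \<bullet> w))" using psd by metis
  then have "t * K \<ge> 2 * (w \<bullet> w)" using t0 by (simp add: zero_le_mult_iff)
  moreover have "t * K < w \<bullet> w"
  proof -
    have "t * K = (w \<bullet> w) * (K / (K+1))" by (simp add: t_def)
    also have "\<dots> < (w \<bullet> w) * 1" using ww K0 by (intro mult_strict_left_mono) auto
    finally show ?thesis by simp
  qed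
  ultimately show False using ww by linarith
qed

lemma eig_finite:
  fixes A :: "real^'n^'n"
  assumes symA: "transpose A = A"
  shows "finite {c. \<exists>v. v \<noteq> 0 \<and> A *v v = c *\<^sub>R v}"
proof -
  define E where "E = {c. \<exists>v. v \<noteq> 0 \<and> A *v v = c *\<^sub>R v}"
  define f where "f c = (SOME v. v \<noteq> 0 \<and> A *v v = c *\<^sub>R v)" for c
  have f: "f c \<noteq> 0 \<and> A *v f c = c *\<^sub>R f c" if "c \<in> E" for c
  proof -
    from that obtain v where "v \<noteq> 0 \<and> A *v v = c *\<^sub>R v" unfolding E_def by blast
    then show ?thesis unfolding f_def by (rule someI)
  qed
  have orth: "f c \<bullet> f d = 0" if "c \<in> E" "d \<in> E" "c \<noteq> d" for c d
  proof -
    have "c * (f c \<bullet> f d) = (A *v f c) \<bullet> f d" using f[OF that(1)] by simp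
    also have "\<dots> = f c \<bullet> (A *v f d)" using sym_dot[OF symA] by metis
    also have "\<dots> = d * (f c \<bullet> f d)" using f[OF that(2)] by simp
    finally show ?thesis using that(3) by simp
  qed
  have inj: "inj_on f E"
  proof
    fix c d assume c: "c \<in> E" and d: "d \<in> E" and eq: "f c = f d"
    show "c = d"
    proof (rule ccontr)
      assume "c \<noteq> d"
      then have "f c \<bullet> f c = 0" using orth[OF c d] eq by simp
      then show False using f[OF c] by simp
    qed
  qed
  have "pairwise orthogonal (f ` E)"
    unfolding pairwise_def orthogonal_def using orth by fastforce
  moreover have "0 \<notin> f ` E" using f by force
  ultimately have "independent (f ` E)" by (rule pairwise_orthogonal_independent)
  then have "finite (f ` E)" by (rule independent_imp_finite)
  then show ?thesis using finite_imageD[OF _ inj] E_def by simp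
qed

lemma lambda_max_ge:
  fixes A :: "real^'n^'n"
  assumes symA: "transpose A = A"
  shows "\<exists>M. M \<le> lambda_max A \<and> (\<forall>w. w \<bullet> (A *v w) \<le> M * (norm w)^2)"
proof -
  obtain v where v: "norm v = 1" "\<forall>w. w \<bullet> (A *v w) \<le> (v \<bullet> (A *v v)) * (norm w)^2"
    using rayleigh_max[of A] by blast
  define M where "M = v \<bullet> (A *v v)"
  define C where "C = M *\<^sub>R mat 1 - A"
  have Cx: "C *v x = M *\<^sub>R x - A *v x" for x
    by (simp add: C_def vec_eq_iff matrix_vector_mult_def sum_subtractf algebra_simps mat_def mulif)
  have symC: "transpose C = C"
    using symA by (simp add: C_def vec_eq_iff transpose_def mat_def)
  have psd: "\<forall>x. x \<bullet> (C *v x) \<ge> 0"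
    using v(2) by (simp add: Cx inner_diff_right M_def power2_norm_eq_inner)
  have "v \<bullet> (C *v v) = 0"
    using v(1) by (simp add: Cx inner_diff_right M_def power2_norm_eq_inner[symmetric])
  then have "C *v v = 0" by (rule psd_null[OF symC psd])
  then have "A *v v = M *\<^sub>R v" by (simp add: Cx)
  moreover have "v \<noteq> 0" using v(1) by auto
  ultimately have "M \<in> {c. \<exists>v. v \<noteq> 0 \<and> A *v v = c *\<^sub>R v}" by blast
  then have "M \<le> lambda_max A"
    unfolding lambda_max_def using eig_finite[OF symA] by (rule Max_ge[rotated])
  then show ?thesis using v(2) M_def by blast
qed


lemma contraction:
  fixes A :: "real^'n^'n"
  assumes symA: "transpose A = A"
    and pdA: "\<forall>x. x \<noteq> 0 \<longrightarrow> x \<bullet> (A *v x) > 0"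
    and g0: "0 < \<gamma>" and gL: "\<gamma> \<le> 1 / lambda_max A"
  shows "\<exists>q. 0 \<le> q \<and> q < 1 \<and> (\<forall>v. norm (v - \<gamma> *\<^sub>R (A *v v)) \<le> q * norm v)"
proof -
  obtain M where M: "M \<le> lambda_max A" "\<forall>w. w \<bullet> (A *v w) \<le> M * (norm w)^2"
    using lambda_max_ge[OF symA] by blast
  obtain v0 where v0: "norm v0 = 1" "\<forall>w. (v0 \<bullet> (A *v v0)) * (norm w)^2 \<le> w \<bullet> (A *v w)"
    using rayleigh_min[of A] by blast
  define \<mu> where "\<mu> = v0 \<bullet> (A *v v0)"
  have "v0 \<noteq> 0" using v0(1) by auto
  then have mu0: "\<mu> > 0" using pdA by (simp add: \<mu>_def)
  have muM: "\<mu> \<le> M" using M(2)[rule_format, of v0] v0(1) by (simp add: \<mu>_def)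
  have lam: "lambda_max A > 0" using mu0 muM M(1) by linarith
  have gM: "\<gamma> * M \<le> 1"
  proof -
    have "\<gamma> * M \<le> \<gamma> * lambda_max A" using M(1) g0 by simp
    also have "\<dots> \<le> 1" using gL lam by (simp add: field_simps)
    finally show ?thesis .
  qed
  have gmu: "\<gamma> * \<mu> \<le> 1" using gM muM g0 by (smt (verit) mult_left_mono)
  have gmu0: "\<gamma> * \<mu> > 0" using g0 mu0 by simp
  have psd: "x \<bullet> (A *v x) \<ge> \<mu> * (norm x)^2" for x using v0(2) by (simp add: \<mu>_def)
  have key: "(norm (v - \<gamma> *\<^sub>R (A *v v)))^2 \<le> (1 - \<gamma> * \<mu>) * (norm v)^2" for v
  proof -
    define w where "w = A *v v"
    define a where "a = v \<bullet> w"
    have "0 \<le> \<mu> * (norm (\<gamma> *\<^sub>R w - v))^2" using mu0 by simp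
    also have "\<dots> \<le> (\<gamma> *\<^sub>R w - v) \<bullet> (A *v (\<gamma> *\<^sub>R w - v))" by (rule psd)
    also have "\<dots> = \<gamma>^2 * (w \<bullet> (A *v w)) - \<gamma> * (w \<bullet> (A *v v)) - \<gamma> * (v \<bullet> (A *v w)) + v \<bullet> (A *v v)"
      by (simp add: algebra_simps inner_diff_left inner_diff_right power2_eq_square)
    also have "\<dots> = \<gamma>^2 * (w \<bullet> (A *v w)) - 2 * \<gamma> * (w \<bullet> w) + a"
      using sym_dot[OF symA, of v w] by (simp add: w_def a_def inner_commute)
    finally have 1: "0 \<le> \<gamma>^2 * (w \<bullet> (A *v w)) - 2 * \<gamma> * (w \<bullet> w) + a" .
    have "\<gamma>^2 * (w \<bullet> (A *v w)) \<le> \<gamma>^2 * (M * (w \<bullet> w))"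
      using M(2)[rule_format, of w] by (intro mult_left_mono) (auto simp: power2_norm_eq_inner)
    also have "\<dots> = \<gamma> * (\<gamma> * M) * (w \<bullet> w)" by (simp add: power2_eq_square)
    also have "\<dots> \<le> \<gamma> * 1 * (w \<bullet> w)" using gM g0 by (intro mult_right_mono mult_left_mono) auto
    finally have 2: "\<gamma>^2 * (w \<bullet> (A *v w)) \<le> \<gamma> * (w \<bullet> w)" by simp
    have 3: "\<gamma> * (w \<bullet> w) \<le> a" using 1 2 by simp
    have "(norm (v - \<gamma> *\<^sub>R w))^2 = v \<bullet> v - 2 * \<gamma> * a + \<gamma>^2 * (w \<bullet> w)"
      unfolding power2_norm_eq_inner
      by (simp add: inner_diff_left inner_diff_right a_def inner_commute
          power2_eq_square algebra_simps)
    also have "\<dots> \<le> v \<bullet> v - \<gamma> * a"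
    proof -
      have "\<gamma>^2 * (w \<bullet> w) = \<gamma> * (\<gamma> * (w \<bullet> w))" by (simp add: power2_eq_square)
      also have "\<dots> \<le> \<gamma> * a" using 3 g0 by simp
      finally show ?thesis by simp
    qed
    also have "\<dots> \<le> v \<bullet> v - \<gamma> * (\<mu> * (norm v)^2)"
      using psd[of v] g0 by (simp add: a_def w_def)
    also have "\<dots> = (1 - \<gamma> * \<mu>) * (norm v)^2" by (simp add: power2_norm_eq_inner algebra_simps)
    finally show ?thesis by (simp add: w_def)
  qed
  define q where "q = sqrt (1 - \<gamma> * \<mu>)"
  have "norm (v - \<gamma> *\<^sub>R (A *v v)) \<le> q * norm v" for v
  proof -
    have "norm (v - \<gamma> *\<^sub>R (A *v v)) = sqrt ((norm (v - \<gamma> *\<^sub>R (A *v v)))^2)" by simp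
    also have "\<dots> \<le> sqrt ((1 - \<gamma> * \<mu>) * (norm v)^2)" by (rule real_sqrt_le_mono[OF key])
    also have "\<dots> = q * norm v" using gmu by (simp add: q_def real_sqrt_mult)
    finally show ?thesis .
  qed
  moreover have "0 \<le> q" "q < 1" using gmu gmu0 by (auto simp: q_def)
  ultimately show ?thesis by blast
qed


lemma quad_opt:
  fixes A :: "real^'n^'n"
  assumes symA: "transpose A = A"
    and pdA: "\<forall>x. x \<noteq> 0 \<longrightarrow> x \<bullet> (A *v x) > 0"
    and g0: "0 < \<gamma>"
    and fxp: "closest_point (l1ball B) (xs - \<gamma> *\<^sub>R (A *v xs + b)) = xs"
    and z: "z \<in> l1ball B"
  shows "quad_obj A b xs \<le> quad_obj A b z"
proof -
  define g where "g = A *v xs + b"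
  define d where "d = z - xs"
  have "((xs - \<gamma> *\<^sub>R g) - xs) \<bullet> (z - xs) \<le> 0"
    using closest_point_dot[OF l1ball_convex l1ball_closed z, of "xs - \<gamma> *\<^sub>R g"] fxp
    by (simp add: g_def)
  then have "- \<gamma> * (g \<bullet> d) \<le> 0" by (simp add: d_def)
  then have gd: "g \<bullet> d \<ge> 0" using g0 by (simp add: zero_le_mult_iff)
  have dd: "d \<bullet> (A *v d) \<ge> 0" using pdA by (cases "d = 0") (auto intro: less_imp_le)
  have zz: "z = xs + d" by (simp add: d_def)
  have s: "xs \<bullet> (A *v d) = (A *v xs) \<bullet> d" by (rule sym_dot[OF symA])
  have s2: "d \<bullet> (A *v xs) = (A *v xs) \<bullet> d" by (rule inner_commute)
  have e1: "(xs + d) \<bullet> (A *v (xs + d)) = xs \<bullet> (A *v xs) + 2 * ((A *v xs) \<bullet> d) + d \<bullet> (A *v d)"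
    by (simp only: matrix_vector_right_distrib inner_add_left inner_add_right s s2; simp)
  have e2: "b \<bullet> (xs + d) = b \<bullet> xs + b \<bullet> d" by (rule inner_add_right)
  have e3: "(A *v xs + b) \<bullet> d = (A *v xs) \<bullet> d + b \<bullet> d" by (rule inner_add_left)
  have "quad_obj A b z = quad_obj A b xs + (g \<bullet> d) + (1/2) * (d \<bullet> (A *v d))"
    unfolding zz quad_obj_def g_def e1 e2 e3 by (simp add: algebra_simps)
  then show ?thesis using gd dd by simp
qed

lemma l1ball_zero:
  assumes "(B::real) > 0" shows "(0::real^'n) \<in> l1ball B"
proof -
  have "l1norm (0::real^'n) = 0" unfolding l1norm_def by (simp only: zero_index abs_zero sum.neutral_const)
  then show ?thesis using assms unfolding l1ball_def by simp
qed

theorem proposition4: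
  fixes A :: "real^'n^'n" and b :: "real^'n" and B :: real
  assumes symA: "transpose A = A"
    and pdA: "\<forall>x. x \<noteq> 0 \<longrightarrow> x \<bullet> (A *v x) > 0"
    and Bpos: "B > 0"
  shows "(\<forall>\<theta> y. \<theta> \<ge> 0 \<longrightarrow> nn_soft \<theta> y = soft_thresh \<theta> (y :: real^'n))
     \<and> (\<forall>(y :: real^'n) \<eta>. 0 < \<eta> \<and> \<eta> \<le> 1 / real CARD('n) \<longrightarrow>
          (\<exists>\<theta>s. \<theta>s \<ge> 0 \<and> thr_seq \<eta> B y \<longlonglongrightarrow> \<theta>s
                 \<and> nn_soft \<theta>s y = closest_point (l1ball B) y))
     \<and> (\<forall>(\<gamma>::real) (\<eta>::real) (x :: nat \<Rightarrow> real^'n) (\<theta> :: nat \<Rightarrow> real).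
          0 < \<gamma> \<and> \<gamma> \<le> 1 / lambda_max A \<and> 0 < \<eta> \<and> \<eta> \<le> 1 / real CARD('n)
          \<and> (\<forall>k. thr_seq \<eta> B (x k - \<gamma> *\<^sub>R (A *v x k + b)) \<longlonglongrightarrow> \<theta> k)
          \<and> (\<forall>k. x (Suc k) = nn_soft (\<theta> k) (x k - \<gamma> *\<^sub>R (A *v x k + b)))
          \<longrightarrow> (\<forall>k. x (Suc k) = closest_point (l1ball B) (x k - \<gamma> *\<^sub>R (A *v x k + b)))
            \<and> (\<exists>xs. x \<longlonglongrightarrow> xs \<and> xs \<in> l1ball B
                   \<and> (\<forall>z \<in> l1ball B. quad_obj A b xs \<le> quad_obj A b z)))"
proof (intro conjI allI impI)
  show "\<And>\<theta> y. \<theta> \<ge> 0 \<Longrightarrow> nn_soft \<theta> y = soft_thresh \<theta> (y :: real^'n)"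
    by (rule nn_soft_eq)
  show "\<And>(y :: real^'n) \<eta>. 0 < \<eta> \<and> \<eta> \<le> 1 / real CARD('n) \<Longrightarrow>
          (\<exists>\<theta>s. \<theta>s \<ge> 0 \<and> thr_seq \<eta> B y \<longlonglongrightarrow> \<theta>s
                 \<and> nn_soft \<theta>s y = closest_point (l1ball B) y)"
    using thr_main[OF _ _ Bpos] by (elim conjE) assumption
  fix \<gamma> \<eta> :: real and x :: "nat \<Rightarrow> real^'n" and \<theta> :: "nat \<Rightarrow> real"
  assume H: "0 < \<gamma> \<and> \<gamma> \<le> 1 / lambda_max A \<and> 0 < \<eta> \<and> \<eta> \<le> 1 / real CARD('n)
          \<and> (\<forall>k. thr_seq \<eta> B (x k - \<gamma> *\<^sub>R (A *v x k + b)) \<longlonglongrightarrow> \<theta> k)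
          \<and> (\<forall>k. x (Suc k) = nn_soft (\<theta> k) (x k - \<gamma> *\<^sub>R (A *v x k + b)))"
  note g0 = H[THEN conjunct1]
  note gl = H[THEN conjunct2, THEN conjunct1]
  note e0 = H[THEN conjunct2, THEN conjunct2, THEN conjunct1]
  note el = H[THEN conjunct2, THEN conjunct2, THEN conjunct2, THEN conjunct1]
  note thl = H[THEN conjunct2, THEN conjunct2, THEN conjunct2, THEN conjunct2, THEN conjunct1]
  note xst = H[THEN conjunct2, THEN conjunct2, THEN conjunct2, THEN conjunct2, THEN conjunct2]
  define T where "T z = closest_point (l1ball B) (z - \<gamma> *\<^sub>R (A *v z + b))" for z :: "real^'n"
  have step: "x (Suc k) = T (x k)" for k
  proof -
    let ?y = "x k - \<gamma> *\<^sub>R (A *v x k + b)"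
    obtain ts where ts: "thr_seq \<eta> B ?y \<longlonglongrightarrow> ts" "nn_soft ts ?y = closest_point (l1ball B) ?y"
      using thr_main[OF e0 el Bpos, of ?y] by (elim exE conjE) (rule that)
    have "ts = \<theta> k" using LIMSEQ_unique[OF ts(1) thl[rule_format, of k]] .
    then show ?thesis using ts(2) xst[rule_format, of k] by (simp add: T_def)
  qed
  then show "x (Suc k) = closest_point (l1ball B) (x k - \<gamma> *\<^sub>R (A *v x k + b))" for k
    by (simp add: T_def)
  obtain q where q: "0 \<le> q" "q < 1" "\<forall>v. norm (v - \<gamma> *\<^sub>R (A *v v)) \<le> q * norm v"
    using contraction[OF symA pdA g0 gl] by (elim exE conjE) (rule that)
  have ne: "l1ball B \<noteq> ({} :: (real^'n) set)"
  proof -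
    have "(0::real^'n) \<in> l1ball B" using Bpos by (rule l1ball_zero)
    then show ?thesis by blast
  qed
  have lipT: "dist (T u) (T v) \<le> q * dist u v" for u v
  proof -
    have "dist (T u) (T v) \<le> dist (u - \<gamma> *\<^sub>R (A *v u + b)) (v - \<gamma> *\<^sub>R (A *v v + b))"
      unfolding T_def by (rule closest_point_lipschitz[OF l1ball_convex l1ball_closed ne])
    also have "\<dots> = norm ((u - v) - \<gamma> *\<^sub>R (A *v (u - v)))"
    proof -
      have "(u - \<gamma> *\<^sub>R (A *v u + b)) - (v - \<gamma> *\<^sub>R (A *v v + b)) = (u - v) - \<gamma> *\<^sub>R (A *v (u - v))"
        by (simp add: matrix_vector_mult_diff_distrib scaleR_diff_right scaleR_add_right)
      then show ?thesis by (simp only: dist_norm)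
    qed
    also have "\<dots> \<le> q * dist u v" using q(3) by (simp add: dist_norm)
    finally show ?thesis .
  qed
  obtain xs where fx: "T xs = xs" using banach_fix_type[OF q(1,2)] lipT by blast
  have dec: "norm (x k - xs) \<le> q^k * norm (x 0 - xs)" for k
  proof (induction k)
    case 0 then show ?case by simp
  next
    case (Suc k)
    have "norm (x (Suc k) - xs) = dist (T (x k)) (T xs)" by (simp add: step fx dist_norm)
    also have "\<dots> \<le> q * norm (x k - xs)" using lipT by (simp add: dist_norm)
    also have "\<dots> \<le> q * (q^k * norm (x 0 - xs))" using Suc q(1) by (rule mult_left_mono)
    finally show ?case by simp
  qed
  have "(\<lambda>k. x k - xs) \<longlonglongrightarrow> 0"
  proof (rule Lim_null_comparison)
    show "\<forall>\<^sub>F k in sequentially. norm (x k - xs) \<le> q^k * norm (x 0 - xs)" using dec by simp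
    show "(\<lambda>k. q^k * norm (x 0 - xs)) \<longlonglongrightarrow> 0"
      using q by (intro tendsto_mult_left_zero LIMSEQ_power_zero) auto
  qed
  then have "x \<longlonglongrightarrow> xs" by (rule LIM_zero_cancel)
  moreover have "xs \<in> l1ball B"
    using closest_point_in_set[OF l1ball_closed ne, of "xs - \<gamma> *\<^sub>R (A *v xs + b)"] fx
    by (simp add: T_def)
  moreover have "\<forall>z \<in> l1ball B. quad_obj A b xs \<le> quad_obj A b z"
    using quad_opt[OF symA pdA g0] fx by (simp add: T_def)
  ultimately show "\<exists>xs. x \<longlonglongrightarrow> xs \<and> xs \<in> l1ball B
                   \<and> (\<forall>z \<in> l1ball B. quad_obj A b xs \<le> quad_obj A b z)" by blast
qed

end
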